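(* Let $R$ be a suitable ring, and let $x_1,x_2,x_3\in R$ satisfy $x_1+x_2+x_3=1$, where $x_1$ is an idempotent. Then there exist pairwise orthogonal idempotents $e_1\in Rx_1$, $e_2\in Rx_2$, $e_3\in Rx_3$ such that $e_1+e_2+e_3=1$ and $x_1\sim e_1$.
   Context: A ring $R$ (associative with $1$) is suitable if whenever $x+y=1$ in $R$ there are orthogonal idempotents $e\in Rx$ and $f\in Ry$ with $e+f=1$. For idempotents $e,e'\in R$, write $e\sim e'$ ($e$ and $e'$ are left strongly isomorphic) if $e'e=e'$ and $ee'=e$. *)

theory Defs
  imports Main
begin

definition idem :: "'a::ring_1 \<Rightarrow> bool" where
  "idem e \<longleftrightarrow> e * e = e"

definition left_ideal_gen :: "'a::ring_1 \<Rightarrow> 'a set" where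
  "left_ideal_gen x = {r * x | r. True}"

definition suitable :: "'a::ring_1 itself \<Rightarrow> bool" where
  "suitable TYPE('a) \<longleftrightarrow>
     (\<forall>x y :: 'a. x + y = 1 \<longrightarrow>
        (\<exists>e f. idem e \<and> idem f \<and> e * f = 0 \<and> f * e = 0 \<and>
               e \<in> left_ideal_gen x \<and> f \<in> left_ideal_gen y \<and> e + f = 1))"

definition left_strong_iso :: "'a::ring_1 \<Rightarrow> 'a \<Rightarrow> bool" where
  "left_strong_iso e e' \<longleftrightarrow> e' * e = e' \<and> e * e' = e"

end

theory Submission
  imports Defs
begin

theorem lemma2:
  fixes x1 x2 x3 :: "'a::ring_1"
  assumes "suitable TYPE('a)"
    and "x1 + x2 + x3 = 1"
    and "idem x1"
  shows "\<exists>e1 e2 e3. idem e1 \<and> idem e2 \<and> idem e3 \<and>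
           e1 * e2 = 0 \<and> e2 * e1 = 0 \<and> e1 * e3 = 0 \<and> e3 * e1 = 0 \<and>
           e2 * e3 = 0 \<and> e3 * e2 = 0 \<and>
           e1 \<in> left_ideal_gen x1 \<and> e2 \<in> left_ideal_gen x2 \<and> e3 \<in> left_ideal_gen x3 \<and>
           e1 + e2 + e3 = 1 \<and> left_strong_iso x1 e1"
proof -
  define p where "p = x1"
  define q where "q = 1 - p"
  have pp: "p * p = p" using assms(3) by (simp add: p_def idem_def)
  have qq: "q * q = q" using pp by (simp add: q_def algebra_simps)
  have pq: "p * q = 0" using pp by (simp add: q_def algebra_simps)
  have qp: "q * p = 0" using pp by (simp add: q_def algebra_simps)
  have x23: "x2 + x3 = q" using assms(2) by (simp add: q_def p_def algebra_simps)
  define A where "A = q * x2 * q"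
  define B where "B = q * x3 * q"
  have AB: "A + B = q"
  proof -
    have "A + B = q * (x2 + x3) * q" by (simp add: A_def B_def algebra_simps)
    also have "\<dots> = q" using x23 qq by simp
    finally show ?thesis .
  qed
  have oneA: "1 - A = p + B" using AB by (simp add: q_def algebra_simps)
  have "A + (1 - A) = 1" by simp
  then obtain g f where gi: "g * g = g" and fi: "f * f = f" and gf: "g * f = 0" and fg: "f * g = 0"
    and gA: "g \<in> left_ideal_gen A" and fA: "f \<in> left_ideal_gen (1 - A)" and gf1: "g + f = 1"
    using assms(1) unfolding suitable_def idem_def by blast
  obtain r where r: "g = r * A" using gA by (auto simp: left_ideal_gen_def)
  obtain s where s: "f = s * (1 - A)" using fA by (auto simp: left_ideal_gen_def)
  have Aq: "A * q = A" by (simp add: A_def mult.assoc qq)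
  have Bq: "B * q = B" by (simp add: B_def mult.assoc qq)
  have gq: "g * q = g" by (simp add: r mult.assoc Aq)
  define G where "G = q * g"
  define E where "E = q - G"
  have GG: "G * G = G" by (metis G_def gi gq mult.assoc)
  have Gq: "G * q = G" by (simp add: G_def mult.assoc gq)
  have qG: "q * G = G" by (simp add: G_def mult.assoc[symmetric] qq)
  have f1: "f = 1 - g" using gf1 by (simp add: eq_diff_eq add.commute)
  have Ef: "E = q * f" by (simp add: E_def G_def f1 right_diff_distrib)
  have Eq: "E * q = E" using Gq qq by (simp add: E_def algebra_simps)
  have qE: "q * E = E" using qG qq by (simp add: E_def algebra_simps)
  have EE: "E * E = E" using qG Gq GG qq by (simp add: E_def algebra_simps)
  have GE: "G * E = 0" using qG Gq GG qq by (simp add: E_def algebra_simps)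
  have EG: "E * G = 0" using qG Gq GG qq by (simp add: E_def algebra_simps)
  define u2 where "u2 = q * r * q"
  define u3 where "u3 = q * s * q"
  have Gform: "G = u2 * x2 * q" by (simp add: G_def r A_def u2_def mult.assoc)
  have Eform: "E = u3 * x3 * q"
  proof -
    have "E = E * q" using Eq by simp
    also have "\<dots> = q * s * (p + B) * q" by (simp add: Ef s oneA mult.assoc)
    also have "\<dots> = q * s * (p * q + B * q)" by (simp add: algebra_simps)
    also have "\<dots> = q * s * B" by (simp add: pq Bq)
    also have "\<dots> = u3 * x3 * q" by (simp add: u3_def B_def mult.assoc)
    finally show ?thesis .
  qed
  define e2 where "e2 = G * u2 * x2"
  define e3 where "e3 = E * u3 * x3"
  define e1 where "e1 = 1 - e2 - e3"
  have e2q: "e2 * q = G" by (metis GG Gform e2_def mult.assoc)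
  have e3q: "e3 * q = E" by (metis EE Eform e3_def mult.assoc)
  have qe2: "q * e2 = e2" by (simp add: e2_def mult.assoc[symmetric] qG)
  have qe3: "q * e3 = e3" by (simp add: e3_def mult.assoc[symmetric] qE)
  have e22: "e2 * e2 = e2" by (metis GG e2_def e2q mult.assoc qe2)
  have e33: "e3 * e3 = e3" by (metis EE e3_def e3q mult.assoc qe3)
  have e23: "e2 * e3 = 0" by (metis GE e2q mult.assoc mult_zero_left e3_def qe3)
  have e32: "e3 * e2 = 0" by (metis EG e3q mult.assoc mult_zero_left e2_def qe2)
  have pe2: "p * e2 = 0" by (metis mult.assoc mult_zero_left pq qe2)
  have pe3: "p * e3 = 0" by (metis mult.assoc mult_zero_left pq qe3)
  have e1q: "e1 * q = 0" using e2q e3q by (simp add: e1_def E_def algebra_simps)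
  have e1p: "e1 * p = e1"
  proof -
    have "e1 * p = e1 * (1 - q)" by (simp add: q_def)
    also have "\<dots> = e1" using e1q by (simp add: algebra_simps)
    finally show ?thesis .
  qed
  have pe1: "p * e1 = p" using pe2 pe3 by (simp add: e1_def algebra_simps)
  have e11: "e1 * e1 = e1" using e22 e33 e23 e32 by (simp add: e1_def algebra_simps)
  have e12: "e1 * e2 = 0" using e22 e33 e23 e32 by (simp add: e1_def algebra_simps)
  have e21: "e2 * e1 = 0" using e22 e33 e23 e32 by (simp add: e1_def algebra_simps)
  have e13: "e1 * e3 = 0" using e22 e33 e23 e32 by (simp add: e1_def algebra_simps)
  have e31: "e3 * e1 = 0" using e22 e33 e23 e32 by (simp add: e1_def algebra_simps)
  have m1: "e1 \<in> left_ideal_gen x1" unfolding left_ideal_gen_def using e1p p_def by (metis (mono_tags, lifting) mem_Collect_eq)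
  have m2: "e2 \<in> left_ideal_gen x2" unfolding left_ideal_gen_def e2_def by auto
  have m3: "e3 \<in> left_ideal_gen x3" unfolding left_ideal_gen_def e3_def by auto
  show ?thesis
    apply (rule exI[of _ e1], rule exI[of _ e2], rule exI[of _ e3])
    using e11 e22 e33 e12 e21 e13 e31 e23 e32 m1 m2 m3 e1p pe1
    unfolding idem_def left_strong_iso_def using p_def by (simp add: e1_def)
qed

end
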